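(* Let $C_{n_1},C_{n_2},\dots,C_{n_k}$ be any finite sequence of nested commutators, where $C_{n_j}$ is a grade-$n_j$ commutator $[U_{n_j},[U_{n_j-1},\dots,[U_2,U_1]\dots]]$ with each $U_i$ equal to $h\partial_x^2$ or $h^{-1}V(x)$ ($V$ smooth), and let $O_q=y_q(x)h^q\partial_x^q$ with $y_q$ smooth. Define $$W_k=[C_{n_k},[C_{n_{k-1}},\dots,[C_{n_1},O_q]\dots]].$$ Then $\mathrm{ht}(W_k)\le\mathrm{wd}(W_k)$.
   Context: $\mathcal{L}_h$ is the set of differential operators $\sum_{k=0}^n y_k(x)h^{m_k}\partial_x^{d_k}$ ($n,d_k\in\mathbb{N}$, $m_k\in\mathbb{Z}$, $y_k$ smooth). For $P\in\mathcal{L}_h$: $\mathrm{ht}(P)=\max\{d: h^m\partial_x^d\text{ appears in }P\}$, $\mathrm{wd}(P)=\min\{m: h^m\partial_x^d\text{ appears in }P\}$, with $\mathrm{ht}(0)=0$, $\mathrm{wd}(0)=\infty$. *)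

theory Defs
  imports "HOL-Analysis.Analysis"
begin

(* An operator in L_h is represented by its coefficient table:
   P m d is the smooth coefficient function y(x) of the monomial h^m \<partial>_x^d. *)
type_synonym hop = "int \<Rightarrow> nat \<Rightarrow> real \<Rightarrow> real"

definition smooth :: "(real \<Rightarrow> real) \<Rightarrow> bool" where
  "smooth f \<longleftrightarrow> (\<forall>k. (deriv ^^ k) f differentiable_on UNIV)"

definition supp :: "hop \<Rightarrow> (int \<times> nat) set" where
  "supp P = {(m, d). P m d \<noteq> (\<lambda>_. 0)}"

definition valid :: "hop \<Rightarrow> bool" where
  "valid P \<longleftrightarrow> finite (supp P) \<and> (\<forall>m d. smooth (P m d))"

definition mono :: "(real \<Rightarrow> real) \<Rightarrow> int \<Rightarrow> nat \<Rightarrow> hop" where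
  "mono y m d = (\<lambda>m' d'. if m' = m \<and> d' = d then y else (\<lambda>_. 0))"

definition zero_op :: hop where "zero_op = (\<lambda>_ _ _. 0)"

(* composition of differential operators (Leibniz rule):
   (y h^m1 \<partial>^d1)(z h^m2 \<partial>^d2) = h^(m1+m2) \<Sum>_{j\<le>d1} (d1 choose j) y z^(j) \<partial>^(d1-j+d2) *)
definition comp :: "hop \<Rightarrow> hop \<Rightarrow> hop" where
  "comp P Q = (\<lambda>m e x.
     \<Sum>(m1, d1)\<in>supp P. \<Sum>(m2, d2)\<in>supp Q. \<Sum>j\<in>{..d1}.
       if m1 + m2 = m \<and> d1 - j + d2 = e
       then of_nat (d1 choose j) * P m1 d1 x * (deriv ^^ j) (Q m2 d2) x else 0)"

definition comm :: "hop \<Rightarrow> hop \<Rightarrow> hop" where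
  "comm P Q = (\<lambda>m d x. comp P Q m d x - comp Q P m d x)"

definition ht :: "hop \<Rightarrow> nat" where
  "ht P = (if supp P = {} then 0 else Max (snd ` supp P))"

definition wd :: "hop \<Rightarrow> ereal" where
  "wd P = (if supp P = {} then \<infinity> else ereal (of_int (Min (fst ` supp P))))"

fun nest :: "hop list \<Rightarrow> hop" where
  "nest [] = zero_op"
| "nest [u] = u"
| "nest (u # us) = comm u (nest us)"

definition hD2 :: hop where "hD2 = mono (\<lambda>_. 1) 1 2"
definition hinvV :: "(real \<Rightarrow> real) \<Rightarrow> hop" where
  "hinvV V = mono V (-1) 0"
definition Oq :: "(real \<Rightarrow> real) \<Rightarrow> nat \<Rightarrow> hop" where
  "Oq y q = mono y (int q) q"

end

theory Submission
  imports Defs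
begin

definition Aop :: "hop \<Rightarrow> hop \<Rightarrow> int \<Rightarrow> nat \<Rightarrow> real \<Rightarrow> real" where
  "Aop P Q m e x = (\<Sum>p\<in>supp P. \<Sum>q\<in>supp Q.
     if fst p + fst q = m \<and> snd p + snd q = e then P (fst p) (snd p) x * Q (fst q) (snd q) x else 0)"

definition Bop :: "hop \<Rightarrow> hop \<Rightarrow> int \<Rightarrow> nat \<Rightarrow> real \<Rightarrow> real" where
  "Bop P Q m e x = (\<Sum>p\<in>supp P. \<Sum>q\<in>supp Q. \<Sum>j\<in>{1..snd p}.
     if fst p + fst q = m \<and> snd p - j + snd q = e
     then of_nat (snd p choose j) * P (fst p) (snd p) x * (deriv ^^ j) (Q (fst q) (snd q)) x else 0)"

lemma sum_split0: "(\<Sum>j\<in>{..d::nat}. f j) = f 0 + (\<Sum>j\<in>{1..d}. f j)"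
proof -
  have "{..d} = insert 0 {1..d}" by auto
  then show ?thesis by simp
qed

lemma comp_split: "comp P Q m e x = Aop P Q m e x + Bop P Q m e x"
  unfolding comp_def Aop_def Bop_def split_def
  by (simp add: sum_split0 sum.distrib del: binomial_n_0 funpow_0) (intro sum.cong refl, simp)

lemma Aop_sym: "Aop P Q m e x = Aop Q P m e x"
  unfolding Aop_def
  by (subst sum.swap) (intro sum.cong refl, simp add: ac_simps conj_commute)

lemma comm_eq: "comm P Q m e x = Bop P Q m e x - Bop Q P m e x"
  unfolding comm_def comp_split using Aop_sym by simp

lemma Bop_nz:
  assumes "Bop P Q m e x \<noteq> 0"
  shows "\<exists>m1 d1 m2 d2. (m1,d1)\<in>supp P \<and> (m2,d2)\<in>supp Q \<and> m = m1+m2 \<and> e + 1 \<le> d1 + d2"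
proof -
  from assms[unfolded Bop_def]
  obtain p where p: "p \<in> supp P" and
    "(\<Sum>q\<in>supp Q. \<Sum>j\<in>{1..snd p}.
     if fst p + fst q = m \<and> snd p - j + snd q = e
     then of_nat (snd p choose j) * P (fst p) (snd p) x * (deriv ^^ j) (Q (fst q) (snd q)) x else 0) \<noteq> 0"
    by (rule sum.not_neutral_contains_not_neutral)
  from this(2)
  obtain q where q: "q \<in> supp Q" and
    "(\<Sum>j\<in>{1..snd p}.
     if fst p + fst q = m \<and> snd p - j + snd q = e
     then of_nat (snd p choose j) * P (fst p) (snd p) x * (deriv ^^ j) (Q (fst q) (snd q)) x else 0) \<noteq> 0"
    by (rule sum.not_neutral_contains_not_neutral)
  from this(2)
  obtain j where j: "j \<in> {1..snd p}" and
    "(if fst p + fst q = m \<and> snd p - j + snd q = e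
     then of_nat (snd p choose j) * P (fst p) (snd p) x * (deriv ^^ j) (Q (fst q) (snd q)) x else 0) \<noteq> 0"
    by (rule sum.not_neutral_contains_not_neutral)
  then have "fst p + fst q = m \<and> snd p - j + snd q = e" by (auto split: if_splits)
  with p q j show ?thesis
    by (intro exI[of _ "fst p"] exI[of _ "snd p"] exI[of _ "fst q"] exI[of _ "snd q"]) auto
qed

lemma supp_comm:
  assumes "(m,e) \<in> supp (comm P Q)"
  shows "\<exists>m1 d1 m2 d2. (m1,d1)\<in>supp P \<and> (m2,d2)\<in>supp Q \<and> m = m1+m2 \<and> e + 1 \<le> d1 + d2"
proof -
  from assms obtain x where "comm P Q m e x \<noteq> 0" unfolding supp_def by auto
  then have "Bop P Q m e x \<noteq> 0 \<or> Bop Q P m e x \<noteq> 0" unfolding comm_eq by auto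
  then show ?thesis
  proof
    assume "Bop P Q m e x \<noteq> 0" then show ?thesis by (rule Bop_nz)
  next
    assume "Bop Q P m e x \<noteq> 0"
    from Bop_nz[OF this] show ?thesis by (metis add.commute)
  qed
qed

definition good :: "hop \<Rightarrow> int \<Rightarrow> int \<Rightarrow> bool" where
  "good P M c \<longleftrightarrow> (\<forall>m d. (m,d) \<in> supp P \<longrightarrow> m = M \<and> int d \<le> M + c)"

lemma good_comm:
  assumes "good P M1 c1" "good Q M2 c2"
  shows "good (comm P Q) (M1+M2) (c1+c2-1)"
  unfolding good_def
proof (intro allI impI)
  fix m d assume "(m,d) \<in> supp (comm P Q)"
  from supp_comm[OF this] obtain m1 d1 m2 d2 where
    "(m1,d1)\<in>supp P" "(m2,d2)\<in>supp Q" "m = m1+m2" "d + 1 \<le> d1 + d2" by blast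
  with assms show "m = M1 + M2 \<and> int d \<le> M1 + M2 + (c1 + c2 - 1)"
    unfolding good_def by fastforce
qed

lemma supp_mono: "supp (mono y m d) \<subseteq> {(m,d)}"
  unfolding supp_def mono_def by auto

lemma good_mono: "int d \<le> m + c \<Longrightarrow> good (mono y m d) m c"
  using supp_mono unfolding good_def by blast

lemma good_zero: "good zero_op M c"
  unfolding good_def supp_def zero_op_def by auto

lemma good_nest: "set us \<subseteq> {hD2, hinvV V} \<Longrightarrow> \<exists>M. good (nest us) M 1"
proof (induction us rule: nest.induct)
  case 1
  then show ?case using good_zero by auto
next
  case (2 u)
  then have "u = hD2 \<or> u = hinvV V" by auto
  moreover have "good hD2 1 1" unfolding hD2_def by (rule good_mono) simp
  moreover have "good (hinvV V) (-1) 1" unfolding hinvV_def by (rule good_mono) simp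
  ultimately show ?case by auto
next
  case (3 u v vs)
  then have "u = hD2 \<or> u = hinvV V" by auto
  moreover have "good hD2 1 1" unfolding hD2_def by (rule good_mono) simp
  moreover have "good (hinvV V) (-1) 1" unfolding hinvV_def by (rule good_mono) simp
  ultimately obtain M0 where g0: "good u M0 1" by auto
  from 3 obtain M where "good (nest (v # vs)) M 1" by auto
  from good_comm[OF g0 this] show ?case by auto
qed

theorem theorem4p3:
  fixes V y :: "real \<Rightarrow> real" and q :: nat and Cs :: "hop list list"
  assumes "smooth V" and "smooth y"
    and "\<forall>us\<in>set Cs. length us \<ge> 2 \<and> set us \<subseteq> {hD2, hinvV V}"
  shows "ereal (real (ht (foldr (\<lambda>us W. comm (nest us) W) Cs (Oq y q))))
           \<le> wd (foldr (\<lambda>us W. comm (nest us) W) Cs (Oq y q))"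
proof -
  define W where "W = foldr (\<lambda>us W. comm (nest us) W) Cs (Oq y q)"
  have "\<exists>M. good W M 0" unfolding W_def using assms(3)
  proof (induction Cs)
    case Nil
    have "good (Oq y q) (int q) 0" unfolding Oq_def by (rule good_mono) simp
    then show ?case by auto
  next
    case (Cons us Cs)
    then obtain M where "good (foldr (\<lambda>us W. comm (nest us) W) Cs (Oq y q)) M 0" by auto
    moreover have "set us \<subseteq> {hD2, hinvV V}" using Cons.prems by auto
    then obtain M1 where "good (nest us) M1 1" using good_nest by blast
    ultimately show ?case using good_comm by fastforce
  qed
  then obtain M where g: "good W M 0" by auto
  have "ereal (real (ht W)) \<le> wd W"
  proof (cases "supp W = {}")
    case True then show ?thesis unfolding ht_def wd_def by simp
  next
    case False
    have sub: "supp W \<subseteq> {M} \<times> {0..nat M}" using g unfolding good_def by fastforce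
    then have fin: "finite (supp W)" by (rule finite_subset) auto
    have "fst ` supp W = {M}" using sub False by (force simp: image_iff)
    then have wdM: "wd W = ereal (of_int M)" unfolding wd_def using False by simp
    have "Max (snd ` supp W) \<in> snd ` supp W" using fin False by (intro Max_in) auto
    then have "int (Max (snd ` supp W)) \<le> M" using g unfolding good_def by fastforce
    then have "real (ht W) \<le> of_int M" unfolding ht_def using False by simp
    then show ?thesis unfolding wdM by simp
  qed
  then show ?thesis unfolding W_def .
qed

end
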